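(* Let $\mathfrak A,\mathfrak B$ be $*$-algebras and let $\sigma,\tau:\mathfrak A\to\mathfrak B$ be $*$-linear mappings. Then every $*$-$(\sigma,\tau)$-derivation $d:\mathfrak A\to\mathfrak B$ is a $*$-$\frac{\sigma+\tau}{2}$-derivation, i.e. $d(ab)=d(a)\frac{\sigma+\tau}{2}(b)+\frac{\sigma+\tau}{2}(a)d(b)$ for all $a,b\in\mathfrak A$.
   Context: A map $\sigma$ between $*$-algebras is $*$-linear if it is linear and $\sigma(a^* )=\sigma(a)^*$. A $*$-$(\sigma,\tau)$-derivation is a linear map $d:\mathfrak A\to\mathfrak B$ with $d(a^* )=d(a)^*$ and $d(ab)=d(a)\sigma(b)+\tau(a)d(b)$ for all $a,b\in\mathfrak A$. For a linear map $\gamma:\mathfrak A\to\mathfrak B$, a $*$-$\gamma$-derivation is a $*$-preserving linear map $d$ with $d(ab)=d(a)\gamma(b)+\gamma(a)d(b)$ for all $a,b$. *)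

theory Defs
  imports Complex_Main
begin

class complex_algebra = ring +
  fixes scaleC :: "complex \<Rightarrow> 'a \<Rightarrow> 'a"
  assumes scaleC_add_right: "scaleC c (x + y) = scaleC c x + scaleC c y"
    and scaleC_add_left: "scaleC (c + e) x = scaleC c x + scaleC e x"
    and scaleC_scaleC: "scaleC c (scaleC e x) = scaleC (c * e) x"
    and scaleC_one: "scaleC 1 x = x"
    and mult_scaleC_left: "scaleC c x * y = scaleC c (x * y)"
    and mult_scaleC_right: "x * scaleC c y = scaleC c (x * y)"

class star_algebra = complex_algebra +
  fixes adj :: "'a \<Rightarrow> 'a"
  assumes adj_adj: "adj (adj x) = x"
    and adj_add: "adj (x + y) = adj x + adj y"
    and adj_scaleC: "adj (scaleC c x) = scaleC (cnj c) (adj x)"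
    and adj_mult: "adj (x * y) = adj y * adj x"

definition clinear_map :: "('a::complex_algebra \<Rightarrow> 'b::complex_algebra) \<Rightarrow> bool" where
  "clinear_map f \<longleftrightarrow> (\<forall>x y. f (x + y) = f x + f y) \<and> (\<forall>c x. f (scaleC c x) = scaleC c (f x))"

definition star_linear :: "('a::star_algebra \<Rightarrow> 'b::star_algebra) \<Rightarrow> bool" where
  "star_linear f \<longleftrightarrow> clinear_map f \<and> (\<forall>a. f (adj a) = adj (f a))"

definition star_sigma_tau_derivation ::
  "('a::star_algebra \<Rightarrow> 'b::star_algebra) \<Rightarrow> ('a \<Rightarrow> 'b) \<Rightarrow> ('a \<Rightarrow> 'b) \<Rightarrow> bool" where
  "star_sigma_tau_derivation \<sigma> \<tau> d \<longleftrightarrow> clinear_map d \<and> (\<forall>a. d (adj a) = adj (d a)) \<and>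
     (\<forall>a b. d (a * b) = d a * \<sigma> b + \<tau> a * d b)"

definition star_gamma_derivation ::
  "('a::star_algebra \<Rightarrow> 'b::star_algebra) \<Rightarrow> ('a \<Rightarrow> 'b) \<Rightarrow> bool" where
  "star_gamma_derivation \<gamma> d \<longleftrightarrow> clinear_map d \<and> (\<forall>a. d (adj a) = adj (d a)) \<and>
     (\<forall>a b. d (a * b) = d a * \<gamma> b + \<gamma> a * d b)"

end

theory Submission
  imports Defs
begin

lemma half_sum: "scaleC (1/2) (z + z) = (z::'a::complex_algebra)"
proof -
  have "scaleC (1/2) (z + z) = scaleC (1/2) z + scaleC (1/2) z" by (rule scaleC_add_right)
  also have "\<dots> = scaleC (1/2 + 1/2) z" by (rule scaleC_add_left[symmetric])
  also have "\<dots> = z" by (simp add: scaleC_one)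
  finally show ?thesis .
qed

theorem proposition3p1:
  fixes \<sigma> \<tau> d :: "'a::star_algebra \<Rightarrow> 'b::star_algebra"
  assumes "star_linear \<sigma>" and "star_linear \<tau>"
    and "star_sigma_tau_derivation \<sigma> \<tau> d"
  shows "star_gamma_derivation (\<lambda>a. scaleC (1/2) (\<sigma> a + \<tau> a)) d"
proof -
  have s: "\<And>a. \<sigma> (adj a) = adj (\<sigma> a)" using assms(1) by (simp add: star_linear_def)
  have t: "\<And>a. \<tau> (adj a) = adj (\<tau> a)" using assms(2) by (simp add: star_linear_def)
  have dl: "clinear_map d" and da: "\<And>a. d (adj a) = adj (d a)"
    and dm: "\<And>a b. d (a * b) = d a * \<sigma> b + \<tau> a * d b"
    using assms(3) by (auto simp: star_sigma_tau_derivation_def)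
  have sw: "d x * \<sigma> y + \<tau> x * d y = \<sigma> x * d y + d x * \<tau> y" for x y
  proof -
    have "adj (d (adj y * adj x)) = adj (d (adj y) * \<sigma> (adj x) + \<tau> (adj y) * d (adj x))"
      by (simp add: dm)
    hence "adj (adj (d (x * y))) = \<sigma> x * d y + d x * \<tau> y"
      by (simp add: adj_mult[symmetric] da s t adj_add adj_adj)
    thus ?thesis by (simp add: adj_adj dm)
  qed
  have "d (a * b) = d a * scaleC (1/2) (\<sigma> b + \<tau> b) + scaleC (1/2) (\<sigma> a + \<tau> a) * d b" for a b
  proof -
    have "d a * scaleC (1/2) (\<sigma> b + \<tau> b) + scaleC (1/2) (\<sigma> a + \<tau> a) * d b
        = scaleC (1/2) ((d a * \<sigma> b + \<tau> a * d b) + (\<sigma> a * d b + d a * \<tau> b))"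
      by (simp only: mult_scaleC_left mult_scaleC_right distrib_left distrib_right scaleC_add_right add_ac)
    also have "\<dots> = d (a * b)" by (simp add: sw[symmetric] half_sum dm)
    finally show ?thesis by simp
  qed
  thus ?thesis using dl da by (simp add: star_gamma_derivation_def)
qed

end
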